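(* For $\psi\in\mathbb{R}$ let $R^{xw}_\psi:\mathbb{R}^4\to\mathbb{R}^4$ be the linear map with matrix $\begin{pmatrix}\cos\psi&0&0&-\sin\psi\\0&1&0&0\\0&0&1&0\\ \sin\psi&0&0&\cos\psi\end{pmatrix}$, and let $Q(\psi)=\pi\big(R^{xw}_\psi(\mathcal{C})\setminus\{(0,0,0,1)\}\big)\subset\mathbb{R}^3$, where $\mathcal{C}=\{(x,y,z,w): x^2+y^2=\tfrac12=z^2+w^2\}$. Then: (i) $Q(0)$ has generalized reflectional symmetry along the $z$-axis. (ii) If $0<|\psi|<\pi/2$, then $Q(\psi)$ has generalized reflectional symmetry along the vertical line $\{(\tan\psi,0,t):t\in\mathbb{R}\}$; and if $0<|\psi|\le\pi/2$, then $Q(\psi)$ has generalized reflectional symmetry along the horizontal line $\{(-\cot\psi,t,0):t\in\mathbb{R}\}$. (iii) Let $R$ be the rotation of $\mathbb{R}^3$ about the $x$-axis by the angle $\pi/2$. Then (a) $Q(\psi+\pi/2)=R(Q(\psi))$ and (b) $Q(\psi+\pi)=Q(\psi)$ for all $\psi$. In particular, $Q(\psi)$ has generalized reflectional symmetry along some line for every $\psi\in\mathbb{R}$.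
   Context: Stereographic projection $\pi:\mathbb{S}^3\setminus\{(0,0,0,1)\}\to\mathbb{R}^3$ is $\pi(x,y,z,w)=\frac{1}{1-w}(x,y,z)$, where $\mathbb{S}^3$ is the unit sphere of $\mathbb{R}^4$. For $\mathbf{a}\in\mathbb{R}^3$ and $\rho>0$ let $\psi_{\mathbf{a},\rho}:\mathbb{R}^3\setminus\{\mathbf{a}\}\to\mathbb{R}^3\setminus\{\mathbf{a}\}$, $\psi_{\mathbf{a},\rho}(\mathbf{p})=\rho^2\frac{\mathbf{p}-\mathbf{a}}{|\mathbf{p}-\mathbf{a}|^2}+\mathbf{a}$ (reflection about the sphere of center $\mathbf{a}$, radius $\rho$). A set $Q\subset\mathbb{R}^3$ has generalized reflectional symmetry along a line $l$ if there exist $\mathbf{m}_0\in l$ and $\rho_0>0$ such that for every $\mathbf{a}\in l$, with $\rho=\sqrt{|\mathbf{a}-\mathbf{m}_0|^2+\rho_0^2}$, one has $\psi_{\mathbf{a},\rho}(Q\setminus\{\mathbf{a}\})=Q\setminus\{\mathbf{a}\}$. *)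

theory Defs
  imports "HOL-Analysis.Analysis"
begin

type_synonym R3 = "real \<times> real \<times> real"
type_synonym R4 = "real \<times> real \<times> real \<times> real"

definition stereo :: "R4 \<Rightarrow> R3" where
  "stereo = (\<lambda>(x,y,z,w). (x / (1 - w), y / (1 - w), z / (1 - w)))"

definition sphere_inv :: "R3 \<Rightarrow> real \<Rightarrow> R3 \<Rightarrow> R3" where
  "sphere_inv a \<rho> p = (\<rho>^2 / (norm (p - a))^2) *\<^sub>R (p - a) + a"

definition gen_refl_sym :: "R3 set \<Rightarrow> R3 set \<Rightarrow> bool" where
  "gen_refl_sym Q l \<longleftrightarrow>
     (\<exists>m0\<in>l. \<exists>\<rho>0>0. \<forall>a\<in>l.
        sphere_inv a (sqrt ((norm (a - m0))^2 + \<rho>0^2)) ` (Q - {a}) = Q - {a})"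

definition clifford :: "R4 set" where
  "clifford = {(x,y,z,w). x^2 + y^2 = 1/2 \<and> z^2 + w^2 = 1/2}"

definition rot_xw :: "real \<Rightarrow> R4 \<Rightarrow> R4" where
  "rot_xw \<psi> = (\<lambda>(x,y,z,w). (cos \<psi> * x - sin \<psi> * w, y, z, sin \<psi> * x + cos \<psi> * w))"

definition Qpsi :: "real \<Rightarrow> R3 set" where
  "Qpsi \<psi> = stereo ` (rot_xw \<psi> ` clifford - {(0,0,0,1)})"

definition rot_x90 :: "R3 \<Rightarrow> R3" where
  "rot_x90 = (\<lambda>(x,y,z). (x, - z, y))"

definition is_line :: "R3 set \<Rightarrow> bool" where
  "is_line l \<longleftrightarrow> (\<exists>p d. d \<noteq> 0 \<and> l = {p + t *\<^sub>R d | t. True})"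

end

theory Submission
  imports Defs
begin

definition G' :: "real \<Rightarrow> real \<Rightarrow> real \<Rightarrow> real \<Rightarrow> real" where
 "G' T x y S = (2*x + T*(S-1))^2 + (1+T^2)*(4*y^2 - (S+1)^2/2)"

definition G :: "real \<Rightarrow> real \<Rightarrow> real \<Rightarrow> real \<Rightarrow> real" where
 "G T x y z = G' T x y (x^2+y^2+z^2)"

lemma G'_scale:
  "l^2 * G' T x y S = (2*(l*x) + T*(l*S - l))^2 + (1+T^2)*(4*(l*y)^2 - (l*S+l)^2/2)"
  unfolding G'_def by (simp add: power2_eq_square algebra_simps)

lemma vert_core:
  fixes T t u b w l :: real
  assumes ln: "l * (u^2+b^2+w^2) = T^2+t^2+1"
  shows "G T (T+l*u) (l*b) (t+l*w) = l^2 * G T (T+u) b (t+w)"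
proof -
  define r where "r = T^2+t^2+1"
  define e where "e = T*u+t*w"
  have Sq: "(T+l*u)^2+(l*b)^2+(t+l*w)^2 = T^2+t^2+2*l*e+l*r"
  proof -
    have "(T+l*u)^2+(l*b)^2+(t+l*w)^2 = T^2+t^2+2*l*e+l*(l*(u^2+b^2+w^2))"
      by (simp add: e_def power2_eq_square algebra_simps)
    then show ?thesis using ln r_def by simp
  qed
  have Sp: "l*((T+u)^2+b^2+(t+w)^2) = l*(T^2+t^2+2*e) + r"
  proof -
    have "l*((T+u)^2+b^2+(t+w)^2) = l*(T^2+t^2+2*e) + l*(u^2+b^2+w^2)"
      by (simp add: e_def power2_eq_square algebra_simps)
    then show ?thesis using ln r_def by simp
  qed
  have "l^2 * G T (T+u) b (t+w) = (2*(l*(T+u)) + T*(l*((T+u)^2+b^2+(t+w)^2) - l))^2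
      + (1+T^2)*(4*(l*b)^2 - (l*((T+u)^2+b^2+(t+w)^2)+l)^2/2)"
    unfolding G_def by (rule G'_scale)
  also have "\<dots> = (2*(l*(T+u)) + T*(l*(T^2+t^2+2*e) + r - l))^2
      + (1+T^2)*(4*(l*b)^2 - (l*(T^2+t^2+2*e) + r +l)^2/2)"
    by (simp only: Sp)
  also have "\<dots> = G T (T+l*u) (l*b) (t+l*w)"
  proof -
    have A: "2*(T+l*u) + T*((T^2+t^2+2*l*e+l*r)-1) = 2*(l*(T+u)) + T*(l*(T^2+t^2+2*e) + r - l)"
      by (simp add: r_def power2_eq_square algebra_simps)
    have B: "(T^2+t^2+2*l*e+l*r)+1 = l*(T^2+t^2+2*e) + r +l"
      by (simp add: r_def power2_eq_square algebra_simps)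
    show ?thesis unfolding G_def Sq G'_def using A B by simp
  qed
  finally show ?thesis by simp
qed
definition F1 :: "real \<Rightarrow> real \<Rightarrow> R3 \<Rightarrow> real" where
  "F1 c s = (\<lambda>(x,y,z). (2*c*x + s*((x^2+y^2+z^2)-1))^2 + 4*y^2 - ((x^2+y^2+z^2)+1)^2/2)"

lemma Q_sub: "Qpsi \<psi> \<subseteq> {p. F1 (cos \<psi>) (sin \<psi>) p = 0}"
proof
  fix p assume "p \<in> Qpsi \<psi>"
  then obtain v where v: "v \<in> clifford" and ne: "rot_xw \<psi> v \<noteq> (0,0,0,1)"
      and p: "p = stereo (rot_xw \<psi> v)" unfolding Qpsi_def by blast
  obtain e1 e2 e3 e4 where vv: "v = (e1,e2,e3,e4)" by (cases v) auto
  define c where "c = cos \<psi>"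
  define s where "s = sin \<psi>"
  have cs: "s^2+c^2 = 1" by (simp add: c_def s_def)
  define X where "X = c*e1 - s*e4"
  define W where "W = s*e1 + c*e4"
  have h1: "e1^2+e2^2 = 1/2" "e3^2+e4^2 = 1/2" using v vv by (auto simp: clifford_def)
  have "X^2+W^2 = (s^2+c^2)*(e1^2+e4^2)" by (simp add: X_def W_def power2_eq_square algebra_simps)
  then have hXW: "X^2+W^2 = e1^2+e4^2" using cs by simp
  have hn: "X^2+e2^2+e3^2+W^2 = 1" using hXW h1 by simp
  have rot: "rot_xw \<psi> v = (X,e2,e3,W)" by (simp add: vv rot_xw_def X_def W_def c_def s_def)
  have W1: "W \<noteq> 1"
  proof
    assume "W = 1"
    then have "X^2+e2^2+e3^2 = 0" using hn by simp
    then have "X = 0" "e2 = 0" "e3 = 0" by (simp_all add: sum_power2_eq_zero_iff add_nonneg_eq_0_iff)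
    with \<open>W = 1\<close> ne rot show False by simp
  qed
  then have W1': "1 - W \<noteq> 0" by simp
  have pp: "p = (X/(1-W), e2/(1-W), e3/(1-W))" by (simp add: p rot stereo_def)
  have key: "c*X+s*W = e1"
  proof -
    have "c*X+s*W = (s^2+c^2)*e1" by (simp add: X_def W_def power2_eq_square algebra_simps)
    then show ?thesis using cs by simp
  qed
  define S where "S = (X/(1-W))^2+(e2/(1-W))^2+(e3/(1-W))^2"
  have S: "S = (1+W)/(1-W)"
  proof -
    have "S = (X^2+e2^2+e3^2)/(1-W)^2" by (simp add: S_def power_divide add_divide_distrib)
    also have "X^2+e2^2+e3^2 = (1-W)*(1+W)" using hn by (simp add: power2_eq_square algebra_simps)
    finally show ?thesis using W1' by (simp add: power2_eq_square)
  qed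
  have Sm: "S - 1 = 2*W/(1-W)" using S W1' by (simp add: field_simps)
  have Sp: "S + 1 = 2/(1-W)" using S W1' by (simp add: field_simps)
  have "F1 c s p = (2*c*(X/(1-W)) + s*(S-1))^2 + 4*(e2/(1-W))^2 - (S+1)^2/2"
    by (simp add: F1_def pp S_def)
  also have "\<dots> = (2*c*(X/(1-W)) + s*(2*W/(1-W)))^2 + 4*(e2/(1-W))^2 - (2/(1-W))^2/2"
    by (simp only: Sm Sp)
  also have "\<dots> = (2*c*(X*(1/(1-W))) + s*(2*W*(1/(1-W))))^2 + 4*(e2*(1/(1-W)))^2 - (2*(1/(1-W)))^2/2"
    by simp
  also have "\<dots> = 4*(1/(1-W))^2*((c*X+s*W)^2 + e2^2 - 1/2)"
    by (simp only: power2_eq_square algebra_simps)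
  also have "\<dots> = 0" using key h1 by simp
  finally show "p \<in> {p. F1 (cos \<psi>) (sin \<psi>) p = 0}" by (simp add: c_def s_def)
qed


lemma Q_sup: "{p. F1 (cos \<psi>) (sin \<psi>) p = 0} \<subseteq> Qpsi \<psi>"
proof
  fix p assume "p \<in> {p. F1 (cos \<psi>) (sin \<psi>) p = 0}"
  then have F: "F1 (cos \<psi>) (sin \<psi>) p = 0" by simp
  obtain x y z where pp: "p = (x,y,z)" by (cases p) auto
  define c where "c = cos \<psi>"
  define s where "s = sin \<psi>"
  have cs: "s^2+c^2 = 1" by (simp add: c_def s_def)
  define S where "S = x^2+y^2+z^2"
  define D where "D = S + 1"
  have D0: "D > 0" unfolding D_def S_def by (smt (verit) zero_le_power2)
  have F': "(2*c*x + s*(S-1))^2 + 4*y^2 = D^2/2" using F by (simp add: F1_def pp S_def D_def c_def s_def)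
  define X where "X = 2*x/D"
  define Y where "Y = 2*y/D"
  define Z where "Z = 2*z/D"
  define W where "W = (S-1)/D"
  define k where "k = 1/D"
  have k: "k*D = 1" using D0 by (simp add: k_def)
  have Xk: "X = 2*x*k" "Y = 2*y*k" "Z = 2*z*k" "W = (S-1)*k" by (simp_all add: X_def Y_def Z_def W_def k_def)
  have n1: "X^2+Y^2+Z^2+W^2 = 1"
  proof -
    have "X^2+Y^2+Z^2+W^2 = k^2 * (4*S + (S-1)^2)" by (simp add: Xk S_def power2_eq_square algebra_simps)
    also have "4*S + (S-1)^2 = D^2" by (simp add: D_def power2_eq_square algebra_simps)
    also have "k^2 * D^2 = 1" using k by (metis power_mult_distrib power_one)
    finally show ?thesis .
  qed
  have v12: "(c*X+s*W)^2 + Y^2 = 1/2"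
  proof -
    have "(c*X+s*W)^2 + Y^2 = k^2*((2*c*x + s*(S-1))^2 + 4*y^2)" by (simp add: Xk power2_eq_square algebra_simps)
    also have "\<dots> = (k*D)^2/2" using F' by (simp add: power_mult_distrib)
    finally show ?thesis using k by simp
  qed
  have rr: "(c*X+s*W)^2 + (-s*X+c*W)^2 = (s^2+c^2)*(X^2+W^2)" by (simp add: power2_eq_square algebra_simps)
  have v34: "Z^2 + (-s*X+c*W)^2 = 1/2" using rr cs n1 v12 by simp
  define v where "v = (c*X+s*W, Y, Z, -s*X+c*W)"
  have vC: "v \<in> clifford" using v12 v34 by (simp add: v_def clifford_def)
  have r1: "c*(c*X+s*W) - s*(-s*X+c*W) = X"
  proof -
    have "c*(c*X+s*W) - s*(-s*X+c*W) = (s^2+c^2)*X" by (simp add: power2_eq_square algebra_simps)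
    then show ?thesis using cs by simp
  qed
  have r2: "s*(c*X+s*W) + c*(-s*X+c*W) = W"
  proof -
    have "s*(c*X+s*W) + c*(-s*X+c*W) = (s^2+c^2)*W" by (simp add: power2_eq_square algebra_simps)
    then show ?thesis using cs by simp
  qed
  have rot: "rot_xw \<psi> v = (X,Y,Z,W)" using r1 r2 by (simp add: v_def rot_xw_def c_def s_def)
  have mW: "1 - W = 2/D" using D0 by (simp add: W_def D_def field_simps)
  have W1: "W \<noteq> 1" using mW D0 by auto
  have st: "stereo (X,Y,Z,W) = p" using D0 by (simp add: stereo_def mW pp X_def Y_def Z_def)
  have "(X,Y,Z,W) \<in> rot_xw \<psi> ` clifford - {(0,0,0,1)}"
    using W1 vC rot by (metis DiffI image_eqI prod.inject singletonD)
  then show "p \<in> Qpsi \<psi>" unfolding Qpsi_def using st by (metis image_eqI)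
qed

lemma Q_char: "Qpsi \<psi> = {p. F1 (cos \<psi>) (sin \<psi>) p = 0}"
  using Q_sub Q_sup by blast


lemma aux1:
  fixes c s x y S :: real
  assumes c: "c \<noteq> 0" and cs: "s^2+c^2 = 1"
  shows "(2*c*x + s*(S-1))^2 + 4*y^2 - (S+1)^2/2 = c^2 * G' (s/c) x y S"
proof -
  have e1: "2*x + (s/c)*(S-1) = (2*c*x + s*(S-1))/c" using c by (simp add: field_simps)
  have e2: "1+(s/c)^2 = 1/c^2" using c cs by (simp add: field_simps)
  have "G' (s/c) x y S = ((2*c*x + s*(S-1))^2 + (4*y^2 - (S+1)^2/2))/c^2"
  proof -
    have e1': "(2*x + (s/c)*(S-1))^2 = (2*c*x + s*(S-1))^2/c^2" by (simp only: e1 power_divide)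
    show ?thesis unfolding G'_def by (simp only: e1' e2) (simp add: add_divide_distrib)
  qed
  then show ?thesis using c by simp
qed

lemma aux2:
  fixes c s x y z :: real
  assumes s: "s \<noteq> 0" and cs: "s^2+c^2 = 1"
  shows "(2*c*x + s*((x^2+y^2+z^2)-1))^2 + 4*y^2 - ((x^2+y^2+z^2)+1)^2/2 = - (s^2 * G (c/s) (-x) z y)"
proof -
  define S where "S = x^2+y^2+z^2"
  have SS: "(-x)^2+z^2+y^2 = S" by (simp add: S_def)
  have e1: "2*(-x) + (c/s)*(S-1) = (c*(S-1) - 2*(s*x))/s" using s by (simp add: field_simps)
  have e2: "1+(c/s)^2 = 1/s^2" using s cs by (simp add: field_simps)
  have "G (c/s) (-x) z y = ((c*(S-1) - 2*(s*x))^2 + (4*z^2 - (S+1)^2/2))/s^2"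
  proof -
    have e1': "(2*(-x) + (c/s)*(S-1))^2 = (c*(S-1) - 2*(s*x))^2/s^2" by (simp only: e1 power_divide)
    show ?thesis unfolding G_def SS unfolding G'_def by (simp only: e1' e2) (simp add: add_divide_distrib)
  qed
  then have A: "s^2 * G (c/s) (-x) z y = (c*(S-1) - 2*(s*x))^2 + (4*z^2 - (S+1)^2/2)" using s by simp
  have B: "(2*c*x + s*(S-1))^2 + (c*(S-1) - 2*(s*x))^2 = (s^2+c^2)*(4*x^2 + (S-1)^2)"
    by (simp add: power2_eq_square algebra_simps)
  have C: "4*x^2 + (S-1)^2 + 4*y^2 + 4*z^2 = (S+1)^2" by (simp add: S_def power2_eq_square algebra_simps)
  show ?thesis unfolding S_def[symmetric] A using B C cs by simp
qed

lemma F1_G: assumes "cos \<psi> \<noteq> 0"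
  shows "F1 (cos \<psi>) (sin \<psi>) (x,y,z) = (cos \<psi>)^2 * G (tan \<psi>) x y z"
  unfolding F1_def G_def tan_def using aux1[OF assms, of "sin \<psi>"] by simp

lemma F1_H: assumes "sin \<psi> \<noteq> 0"
  shows "F1 (cos \<psi>) (sin \<psi>) (x,y,z) = - ((sin \<psi>)^2 * G (cot \<psi>) (-x) z y)"
  unfolding F1_def cot_def using aux2[OF assms, of "cos \<psi>"] by simp

lemma norm3: "(norm ((x,y,z)::R3))^2 = x^2+y^2+z^2"
  by (simp add: norm_Pair)

lemma sphere_inv3: "sphere_inv (a1,a2,a3) \<rho> (x,y,z) =
   (a1 + \<rho>^2/((x-a1)^2+(y-a2)^2+(z-a3)^2) * (x-a1),
    a2 + \<rho>^2/((x-a1)^2+(y-a2)^2+(z-a3)^2) * (y-a2),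
    a3 + \<rho>^2/((x-a1)^2+(y-a2)^2+(z-a3)^2) * (z-a3))"
  unfolding sphere_inv_def by (simp add: norm3 del: power_divide)

lemma inv_props:
  fixes a p :: R3
  assumes "\<rho> > 0" "p \<noteq> a"
  shows "sphere_inv a \<rho> p \<noteq> a" "sphere_inv a \<rho> (sphere_inv a \<rho> p) = p"
proof -
  define d where "d = p - a"
  have d0: "d \<noteq> 0" using assms d_def by simp
  then have n0: "norm d > 0" by simp
  have si: "sphere_inv a \<rho> p - a = (\<rho>^2/(norm d)^2) *\<^sub>R d" by (simp add: sphere_inv_def d_def)
  have k0: "\<rho>^2/(norm d)^2 > 0" using n0 assms by simp
  show "sphere_inv a \<rho> p \<noteq> a" using si k0 d0 by auto
  have nn: "norm (sphere_inv a \<rho> p - a) = \<rho>^2/norm d" using si k0 n0 by (simp add: power2_eq_square)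
  have "sphere_inv a \<rho> (sphere_inv a \<rho> p) = (\<rho>^2/(norm (sphere_inv a \<rho> p - a))^2) *\<^sub>R (sphere_inv a \<rho> p - a) + a"
    by (rule sphere_inv_def)
  also have "\<dots> = (\<rho>^2/(\<rho>^2/norm d)^2) *\<^sub>R ((\<rho>^2/(norm d)^2) *\<^sub>R d) + a"
    by (simp only: nn) (simp only: si)
  finally have X: "sphere_inv a \<rho> (sphere_inv a \<rho> p) = (\<rho>^2/(\<rho>^2/norm d)^2) *\<^sub>R ((\<rho>^2/(norm d)^2) *\<^sub>R d) + a" .
  have "(\<rho>^2/(\<rho>^2/norm d)^2) * (\<rho>^2/(norm d)^2) = 1" using n0 assms by (simp add: field_simps)
  then have "(\<rho>^2/(\<rho>^2/norm d)^2) *\<^sub>R ((\<rho>^2/(norm d)^2) *\<^sub>R d) = d" by simp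
  then show "sphere_inv a \<rho> (sphere_inv a \<rho> p) = p" using X by (simp add: d_def)
qed

lemma inv_sym:
  fixes a :: R3
  assumes "\<rho> > 0" "\<And>p. p \<noteq> a \<Longrightarrow> \<Phi> p = 0 \<Longrightarrow> \<Phi> (sphere_inv a \<rho> p) = 0"
  shows "sphere_inv a \<rho> ` ({p. \<Phi> p = 0} - {a}) = {p. \<Phi> p = 0} - {a}"
proof
  have M: "sphere_inv a \<rho> p \<in> {p. \<Phi> p = 0} - {a}" if "p \<in> {p. \<Phi> p = 0} - {a}" for p
  proof -
    have "p \<noteq> a" "\<Phi> p = 0" using that by auto
    then show ?thesis using assms(2) inv_props(1)[OF assms(1)] by simp
  qed
  show "sphere_inv a \<rho> ` ({p. \<Phi> p = 0} - {a}) \<subseteq> {p. \<Phi> p = 0} - {a}"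
    using M by (rule image_subsetI)
  show "{p. \<Phi> p = 0} - {a} \<subseteq> sphere_inv a \<rho> ` ({p. \<Phi> p = 0} - {a})"
  proof
    fix p assume p: "p \<in> {p. \<Phi> p = 0} - {a}"
    then have "p \<noteq> a" by simp
    then have "p = sphere_inv a \<rho> (sphere_inv a \<rho> p)" using inv_props(2)[OF assms(1)] by simp
    then show "p \<in> sphere_inv a \<rho> ` ({p. \<Phi> p = 0} - {a})" using M[OF p] by (rule image_eqI)
  qed
qed


lemma vert:
  assumes c: "cos \<psi> \<noteq> 0"
  shows "gen_refl_sym (Qpsi \<psi>) {(tan \<psi>, 0, t) | t. True}"
proof -
  define T where "T = tan \<psi>"
  have T2: "(1/\<bar>cos \<psi>\<bar>)^2 = 1 + T^2"
  proof -
    have "(sin \<psi>)^2 + (cos \<psi>)^2 = 1" by simp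
    then show ?thesis using c by (simp add: T_def tan_def power_divide field_simps)
  qed
  define \<Phi> where "\<Phi> = (\<lambda>(x,y,z). G T x y z)"
  have QG: "Qpsi \<psi> = {p. \<Phi> p = 0}"
  proof -
    have "F1 (cos \<psi>) (sin \<psi>) p = 0 \<longleftrightarrow> \<Phi> p = 0" for p
    proof -
      obtain x y z where p: "p = (x,y,z)" by (cases p) auto
      show ?thesis using F1_G[OF c, of x y z] c by (simp add: p \<Phi>_def T_def)
    qed
    then show ?thesis using Q_char by auto
  qed
  have H: "sphere_inv a (sqrt ((norm (a - (T,0,0)))^2 + (1/\<bar>cos \<psi>\<bar>)^2)) ` (Qpsi \<psi> - {a}) = Qpsi \<psi> - {a}"
    if a: "a \<in> {(tan \<psi>, 0, t) | t. True}" for a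
  proof -
    obtain t where at: "a = (T,0,t)" using a T_def by auto
    have na: "(norm (a - (T,0,0)))^2 = t^2" using norm3[of 0 0 t] by (simp add: at)
    define \<rho> where "\<rho> = sqrt ((norm (a - (T,0,0)))^2 + (1/\<bar>cos \<psi>\<bar>)^2)"
    have r2: "\<rho>^2 = T^2+t^2+1" unfolding \<rho>_def na T2 by simp
    have rpos: "\<rho> > 0" unfolding \<rho>_def na T2 by (simp add: add_nonneg_pos) (smt (verit) zero_le_power2)
    have "sphere_inv a \<rho> ` ({p. \<Phi> p = 0} - {a}) = {p. \<Phi> p = 0} - {a}"
    proof (rule inv_sym[OF rpos])
      fix p assume pa: "p \<noteq> a" and P: "\<Phi> p = 0"
      obtain x y z where p: "p = (x,y,z)" by (cases p) auto
      define n where "n = (x-T)^2+(y-0)^2+(z-t)^2"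
      have n0: "n \<noteq> 0"
      proof
        assume "n = 0"
        then have "x - T = 0" "y = 0" "z - t = 0" unfolding n_def by (simp_all add: sum_power2_eq_zero_iff add_nonneg_eq_0_iff)
        then show False using pa p at by simp
      qed
      define l where "l = \<rho>^2/n"
      have ln: "l * ((x-T)^2+y^2+(z-t)^2) = T^2+t^2+1" using n0 r2 by (simp add: l_def n_def)
      have si: "sphere_inv a \<rho> p = (T + l*(x-T), l*y, t + l*(z-t))"
        unfolding at p sphere_inv3 l_def n_def by simp
      have "G T (T + l*(x-T)) (l*y) (t + l*(z-t)) = l^2 * G T (T+(x-T)) y (t+(z-t))"
        by (rule vert_core[OF ln])
      also have "\<dots> = l^2 * \<Phi> p" by (simp add: \<Phi>_def p)
      finally show "\<Phi> (sphere_inv a \<rho> p) = 0" using P si by (simp add: \<Phi>_def)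
    qed
    then show ?thesis unfolding QG \<rho>_def .
  qed
  have m: "(T,0,0) \<in> {(tan \<psi>, 0, t) | t. True}" by (simp add: T_def)
  have r0: "1/\<bar>cos \<psi>\<bar> > 0" using c by simp
  show ?thesis unfolding gen_refl_sym_def using m r0 H by blast
qed

lemma horiz:
  assumes s: "sin \<psi> \<noteq> 0"
  shows "gen_refl_sym (Qpsi \<psi>) {(- cot \<psi>, t, 0) | t. True}"
proof -
  define U where "U = cot \<psi>"
  have U2: "(1/\<bar>sin \<psi>\<bar>)^2 = 1 + U^2"
  proof -
    have "(sin \<psi>)^2 + (cos \<psi>)^2 = 1" by simp
    then show ?thesis using s by (simp add: U_def cot_def power_divide field_simps)
  qed
  define \<Phi> where "\<Phi> = (\<lambda>(x,y,z). G U (-x) z y)"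
  have QG: "Qpsi \<psi> = {p. \<Phi> p = 0}"
  proof -
    have "F1 (cos \<psi>) (sin \<psi>) p = 0 \<longleftrightarrow> \<Phi> p = 0" for p
    proof -
      obtain x y z where p: "p = (x,y,z)" by (cases p) auto
      show ?thesis using F1_H[OF s, of x y z] s by (simp add: p \<Phi>_def U_def)
    qed
    then show ?thesis using Q_char by auto
  qed
  have H: "sphere_inv a (sqrt ((norm (a - (-U,0,0)))^2 + (1/\<bar>sin \<psi>\<bar>)^2)) ` (Qpsi \<psi> - {a}) = Qpsi \<psi> - {a}"
    if a: "a \<in> {(- cot \<psi>, t, 0) | t. True}" for a
  proof -
    obtain t where at: "a = (-U,t,0)" using a U_def by auto
    have na: "(norm (a - (-U,0,0)))^2 = t^2" using norm3[of 0 t 0] by (simp add: at)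
    define \<rho> where "\<rho> = sqrt ((norm (a - (-U,0,0)))^2 + (1/\<bar>sin \<psi>\<bar>)^2)"
    have r2: "\<rho>^2 = U^2+t^2+1" unfolding \<rho>_def na U2 by simp
    have rpos: "\<rho> > 0" unfolding \<rho>_def na U2 by (simp add: add_nonneg_pos) (smt (verit) zero_le_power2)
    have "sphere_inv a \<rho> ` ({p. \<Phi> p = 0} - {a}) = {p. \<Phi> p = 0} - {a}"
    proof (rule inv_sym[OF rpos])
      fix p assume pa: "p \<noteq> a" and P: "\<Phi> p = 0"
      obtain x y z where p: "p = (x,y,z)" by (cases p) auto
      define n where "n = (x-(-U))^2+(y-t)^2+(z-0)^2"
      have n0: "n \<noteq> 0"
      proof
        assume "n = 0"
        then have "x - (-U) = 0" "y - t = 0" "z = 0" unfolding n_def by (simp_all add: sum_power2_eq_zero_iff add_nonneg_eq_0_iff)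
        then show False using pa p at by simp
      qed
      define l where "l = \<rho>^2/n"
      have nn: "(-(x+U))^2+z^2+(y-t)^2 = n" by (simp add: n_def power2_eq_square algebra_simps)
      have ln: "l * ((-(x+U))^2+z^2+(y-t)^2) = U^2+t^2+1" unfolding nn using n0 r2 by (simp add: l_def)
      have si: "sphere_inv a \<rho> p = (-U + l*(x+U), t + l*(y-t), l*z)"
        unfolding at p sphere_inv3 l_def n_def by simp
      have "G U (U + l*(-(x+U))) (l*z) (t + l*(y-t)) = l^2 * G U (U+(-(x+U))) z (t+(y-t))"
        by (rule vert_core[OF ln])
      also have "\<dots> = l^2 * \<Phi> p" by (simp add: \<Phi>_def p)
      finally show "\<Phi> (sphere_inv a \<rho> p) = 0" using P si by (simp add: \<Phi>_def algebra_simps)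
    qed
    then show ?thesis unfolding QG \<rho>_def .
  qed
  have m: "(-U,0,0) \<in> {(- cot \<psi>, t, 0) | t. True}" by (simp add: U_def)
  have r0: "1/\<bar>sin \<psi>\<bar> > 0" using s by simp
  show ?thesis unfolding gen_refl_sym_def using m r0 H by blast
qed


lemma F1_rot:
  fixes c s x y z :: real
  assumes cs: "s^2+c^2 = 1"
  shows "F1 (-s) c (x, -z, y) = - F1 c s (x,y,z)"
proof -
  define S where "S = x^2+y^2+z^2"
  have SS: "x^2+(-z)^2+y^2 = S" by (simp add: S_def)
  have A: "F1 (-s) c (x, -z, y) = (2*(-s)*x + c*(S-1))^2 + 4*(-z)^2 - (S+1)^2/2"
  proof -
    have SS2: "x^2+z^2+y^2 = S" by (simp add: S_def)
    show ?thesis unfolding F1_def by (simp add: SS2)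
  qed
  have B: "F1 c s (x, y, z) = (2*c*x + s*(S-1))^2 + 4*y^2 - (S+1)^2/2"
    unfolding F1_def S_def by simp
  have C: "(2*c*x + s*(S-1))^2 + (2*(-s)*x + c*(S-1))^2 = (s^2+c^2)*(4*x^2 + (S-1)^2)"
    by (simp add: power2_eq_square algebra_simps)
  have D: "4*x^2 + (S-1)^2 + 4*y^2 + 4*z^2 = (S+1)^2" by (simp add: S_def power2_eq_square algebra_simps)
  show ?thesis unfolding A B using C D cs by simp
qed

lemma F1_neg: "F1 (-c) (-s) p = F1 c s p"
proof -
  obtain x y z where p: "p = (x,y,z)" by (cases p) auto
  have "2*(-c)*x + (-s)*((x^2+y^2+z^2)-1) = -(2*c*x + s*((x^2+y^2+z^2)-1))" by (simp add: algebra_simps)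
  then show ?thesis unfolding p F1_def by (simp only: prod.case power2_minus)
qed

lemma part_a: "Qpsi (\<psi> + pi/2) = rot_x90 ` Qpsi \<psi>"
proof -
  have cs: "(sin \<psi>)^2 + (cos \<psi>)^2 = 1" by simp
  have c1: "cos (\<psi> + pi/2) = - sin \<psi>" "sin (\<psi> + pi/2) = cos \<psi>" by (simp_all add: cos_add sin_add)
  show ?thesis unfolding Q_char c1
  proof
    show "{p. F1 (- sin \<psi>) (cos \<psi>) p = 0} \<subseteq> rot_x90 ` {p. F1 (cos \<psi>) (sin \<psi>) p = 0}"
    proof
      fix q assume q: "q \<in> {p. F1 (- sin \<psi>) (cos \<psi>) p = 0}"
      obtain x y z where qq: "q = (x,y,z)" by (cases q) auto
      have "F1 (- sin \<psi>) (cos \<psi>) (x, -(-y), z) = 0" using q qq by simp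
      then have "F1 (cos \<psi>) (sin \<psi>) (x, z, -y) = 0" using F1_rot[OF cs, of x "-y" z] by simp
      moreover have "q = rot_x90 (x, z, -y)" by (simp add: qq rot_x90_def)
      ultimately show "q \<in> rot_x90 ` {p. F1 (cos \<psi>) (sin \<psi>) p = 0}" by blast
    qed
    show "rot_x90 ` {p. F1 (cos \<psi>) (sin \<psi>) p = 0} \<subseteq> {p. F1 (- sin \<psi>) (cos \<psi>) p = 0}"
    proof
      fix q assume "q \<in> rot_x90 ` {p. F1 (cos \<psi>) (sin \<psi>) p = 0}"
      then obtain p where p: "F1 (cos \<psi>) (sin \<psi>) p = 0" and qp: "q = rot_x90 p" by blast
      obtain x y z where pp: "p = (x,y,z)" by (cases p) auto
      have "q = (x, -z, y)" by (simp add: qp pp rot_x90_def)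
      then show "q \<in> {p. F1 (- sin \<psi>) (cos \<psi>) p = 0}" using F1_rot[OF cs, of x z y] p pp by simp
    qed
  qed
qed

lemma part_b: "Qpsi (\<psi> + pi) = Qpsi \<psi>"
  unfolding Q_char by (simp add: F1_neg)

lemma line_v: "is_line {(a, 0, t) | t. True}"
  unfolding is_line_def
  by (rule exI[of _ "(a,0,0)"], rule exI[of _ "(0,0,1)"]) (auto simp: zero_prod_def)

lemma line_h: "is_line {(a, t, 0) | t. True}"
  unfolding is_line_def
  by (rule exI[of _ "(a,0,0)"], rule exI[of _ "(0,1,0)"]) (auto simp: zero_prod_def)

theorem proposition1:
  shows "gen_refl_sym (Qpsi 0) {(0, 0, t) | t. True}
    \<and> (\<forall>\<psi>. 0 < \<bar>\<psi>\<bar> \<and> \<bar>\<psi>\<bar> < pi/2 \<longrightarrow> gen_refl_sym (Qpsi \<psi>) {(tan \<psi>, 0, t) | t. True})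
    \<and> (\<forall>\<psi>. 0 < \<bar>\<psi>\<bar> \<and> \<bar>\<psi>\<bar> \<le> pi/2 \<longrightarrow> gen_refl_sym (Qpsi \<psi>) {(- cot \<psi>, t, 0) | t. True})
    \<and> (\<forall>\<psi>. Qpsi (\<psi> + pi/2) = rot_x90 ` Qpsi \<psi>)
    \<and> (\<forall>\<psi>. Qpsi (\<psi> + pi) = Qpsi \<psi>)
    \<and> (\<forall>\<psi>. \<exists>l. is_line l \<and> gen_refl_sym (Qpsi \<psi>) l)"
proof (intro conjI allI impI)
  show "gen_refl_sym (Qpsi 0) {(0, 0, t) | t. True}"
    using vert[of 0] by simp
next
  fix \<psi> :: real assume h: "0 < \<bar>\<psi>\<bar> \<and> \<bar>\<psi>\<bar> < pi/2"
  then have "cos \<psi> > 0" by (intro cos_gt_zero_pi) auto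
  then show "gen_refl_sym (Qpsi \<psi>) {(tan \<psi>, 0, t) | t. True}" by (intro vert) simp
next
  fix \<psi> :: real assume h: "0 < \<bar>\<psi>\<bar> \<and> \<bar>\<psi>\<bar> \<le> pi/2"
  have "sin \<psi> \<noteq> 0"
  proof (cases "\<psi> > 0")
    case True
    then have "sin \<psi> > 0" using h pi_gt_zero by (intro sin_gt_zero) auto
    then show ?thesis by simp
  next
    case False
    then have "sin (-\<psi>) > 0" using h pi_gt_zero by (intro sin_gt_zero) auto
    then show ?thesis by simp
  qed
  then show "gen_refl_sym (Qpsi \<psi>) {(- cot \<psi>, t, 0) | t. True}" by (rule horiz)
next
  fix \<psi> show "Qpsi (\<psi> + pi/2) = rot_x90 ` Qpsi \<psi>" by (rule part_a)
next
  fix \<psi> show "Qpsi (\<psi> + pi) = Qpsi \<psi>" by (rule part_b)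
next
  fix \<psi> :: real
  show "\<exists>l. is_line l \<and> gen_refl_sym (Qpsi \<psi>) l"
  proof (cases "sin \<psi> = 0")
    case True
    then have "cos \<psi> \<noteq> 0" using sin_cos_squared_add[of \<psi>] by auto
    then show ?thesis using vert line_v by blast
  next
    case False
    then show ?thesis using horiz line_h by blast
  qed
qed

end
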